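(* Let $\beta\in\mathcal{A}$ and let $f=\sum_{\alpha\in\mathcal{A}}c_\alpha\mathrm{e}^\alpha\in C_X(\mathcal{A},\beta)$ with $c_\beta<0$. If a nonzero $\nu\in\mathbb{R}^{\mathcal{A}}$ satisfies $\mathbf{1}^T\nu=0$ and $\sigma_X(-\mathcal{A}\nu)+D(\nu_{\setminus\beta},e\,c_{\setminus\beta})\le c_\beta$, but $\nu$ is not an $X$-circuit of $\mathcal{A}$, then $f$ does not generate an extreme ray of $C_X(\mathcal{A},\beta)$.
   Context: $X\subset\mathbb{R}^n$ is a nonempty closed convex set and $\mathcal{A}\subset\mathbb{R}^n$ is a nonempty finite set such that the functions $x\mapsto\exp(\alpha^Tx)$, $\alpha\in\mathcal{A}$, are linearly independent on $X$. $\mathbb{R}^{\mathcal{A}}$ denotes real vectors indexed by $\mathcal{A}$; $c_{\setminus\beta}$ deletes the $\beta$-entry of $c$. $\mathcal{A}\nu=\sum_{\alpha}\alpha\nu_\alpha$. $\sigma_X(y)=\sup\{y^Tx:x\in X\}$. $N_\beta=\{\nu\in\mathbb{R}^{\mathcal{A}}:\nu_\alpha\ge0\ \forall\alpha\neq\beta,\ \sum_\alpha\nu_\alpha=0\}$. A vector $\nu^\star\in N_\beta$ is an $X$-circuit of $\mathcal{A}$ if (1) $\nu^\star\neq0$, (2) $\sigma_X(-\mathcal{A}\nu^\star)<\infty$, and (3) $\nu^\star$ cannot be written as a convex combination of two non-proportional vectors $\nu^{(1)},\nu^{(2)}\in N_\beta$ such that the map $\nu\mapsto\sigma_X(-\mathcal{A}\nu)$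 is affine on the segment $[\nu^{(1)},\nu^{(2)}]$. A signomial supported on $\mathcal{A}$ is $f=\sum_{\alpha}c_\alpha\mathrm{e}^\alpha$ with $\mathrm{e}^\alpha(x)=\exp(\alpha^Tx)$, identified with $c$. The $X$-AGE cone $C_X(\mathcal{A},\beta)$ is the set of signomials supported on $\mathcal{A}$ that are nonnegative on $X$ with $c_\alpha\ge0$ for all $\alpha\ne\beta$. The relative entropy is $D(\nu,c)=\sum_\alpha\nu_\alpha\log(\nu_\alpha/c_\alpha)$, continuously extended to nonnegative arguments, and $+\infty$ if $\nu$ or $c$ has a negative entry; $e$ is Euler's number. *)

theory Defs
  imports "HOL-Analysis.Analysis"
begin

text \<open>Vectors in R^A are represented as functions 'a => real that vanish outside A.\<close>

definition supp_in :: "'a set \<Rightarrow> ('a \<Rightarrow> real) \<Rightarrow> bool" where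
  "supp_in A v \<longleftrightarrow> (\<forall>a. a \<notin> A \<longrightarrow> v a = 0)"

definition support_fun :: "'a::euclidean_space set \<Rightarrow> 'a \<Rightarrow> ereal" where
  "support_fun X y = (SUP x\<in>X. ereal (y \<bullet> x))"

definition exp_mat :: "'a::euclidean_space set \<Rightarrow> ('a \<Rightarrow> real) \<Rightarrow> 'a" where
  "exp_mat A nu = (\<Sum>a\<in>A. nu a *\<^sub>R a)"

definition rel_entr_term :: "real \<Rightarrow> real \<Rightarrow> ereal" where
  "rel_entr_term v c = (if v = 0 then 0 else if c = 0 then \<infinity> else ereal (v * ln (v / c)))"

definition rel_entr :: "'i set \<Rightarrow> ('i \<Rightarrow> real) \<Rightarrow> ('i \<Rightarrow> real) \<Rightarrow> ereal" where
  "rel_entr I nu c = (if \<exists>i\<in>I. nu i < 0 \<or> c i < 0 then \<infinity>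
                      else (\<Sum>i\<in>I. rel_entr_term (nu i) (c i)))"

definition N_set :: "'a set \<Rightarrow> 'a \<Rightarrow> ('a \<Rightarrow> real) set" where
  "N_set A \<beta> = {nu. supp_in A nu \<and> (\<forall>a\<in>A - {\<beta>}. nu a \<ge> 0) \<and> (\<Sum>a\<in>A. nu a) = 0}"

definition proportional :: "('a \<Rightarrow> real) \<Rightarrow> ('a \<Rightarrow> real) \<Rightarrow> bool" where
  "proportional u v \<longleftrightarrow> (\<exists>t. u = (\<lambda>a. t * v a)) \<or> (\<exists>t. v = (\<lambda>a. t * u a))"

definition affine_on_segment ::
  "'a::euclidean_space set \<Rightarrow> 'a set \<Rightarrow> ('a \<Rightarrow> real) \<Rightarrow> ('a \<Rightarrow> real) \<Rightarrow> bool" where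
  "affine_on_segment X A nu1 nu2 \<longleftrightarrow>
     (\<exists>p q::real. \<forall>t\<in>{0..1}.
        support_fun X (- exp_mat A (\<lambda>a. (1 - t) * nu1 a + t * nu2 a)) = ereal (p + q * t))"

definition X_circuit :: "'a::euclidean_space set \<Rightarrow> 'a set \<Rightarrow> 'a \<Rightarrow> ('a \<Rightarrow> real) \<Rightarrow> bool" where
  "X_circuit X A \<beta> nu \<longleftrightarrow>
     nu \<in> N_set A \<beta> \<and> nu \<noteq> (\<lambda>_. 0) \<and>
     support_fun X (- exp_mat A nu) < \<infinity> \<and>
     \<not> (\<exists>nu1 nu2 l. nu1 \<in> N_set A \<beta> \<and> nu2 \<in> N_set A \<beta> \<and> \<not> proportional nu1 nu2 \<and>
            0 < l \<and> l < 1 \<and> nu = (\<lambda>a. l * nu1 a + (1 - l) * nu2 a) \<and>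
            affine_on_segment X A nu1 nu2)"

definition AGE_cone :: "'a::euclidean_space set \<Rightarrow> 'a set \<Rightarrow> 'a \<Rightarrow> ('a \<Rightarrow> real) set" where
  "AGE_cone X A \<beta> = {c. supp_in A c \<and> (\<forall>a\<in>A - {\<beta>}. c a \<ge> 0) \<and>
                        (\<forall>x\<in>X. (\<Sum>a\<in>A. c a * exp (a \<bullet> x)) \<ge> 0)}"

definition generates_extreme_ray :: "('a \<Rightarrow> real) set \<Rightarrow> ('a \<Rightarrow> real) \<Rightarrow> bool" where
  "generates_extreme_ray K f \<longleftrightarrow> f \<in> K \<and> f \<noteq> (\<lambda>_. 0) \<and>
     (\<forall>g h. g \<in> K \<longrightarrow> h \<in> K \<longrightarrow> f = (\<lambda>a. g a + h a) \<longrightarrow>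
        (\<exists>s\<ge>0. g = (\<lambda>a. s * f a)) \<and> (\<exists>t\<ge>0. h = (\<lambda>a. t * f a)))"

end

theory Submission
  imports Defs
begin

lemma key_ineq:
  fixes m c n t :: real
  assumes "0 \<le> m" "0 < c" "0 < n"
  shows "m * t - m * ln (n / (exp 1 * c)) \<le> (c * m / n) * exp t"
proof (cases "m = 0")
  case True then show ?thesis by simp
next
  case False
  hence m: "0 < m" using assms by simp
  define u where "u = t + ln c - ln n"
  have e1: "c * m / n * exp t = m * exp u"
    using assms by (simp add: u_def exp_add exp_diff)
  have e2: "ln (n / (exp 1 * c)) = ln n - 1 - ln c"
    using assms by (simp add: ln_div ln_mult)
  have e3: "m * (1 + u) \<le> m * exp u"
    using m exp_ge_add_one_self[of u] by (intro mult_left_mono) auto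
  have "m * t - m * ln (n / (exp 1 * c)) = m * (1 + u)" unfolding e2 u_def by (simp add: algebra_simps)
  thus ?thesis using e1 e3 by linarith
qed

lemma support_upper:
  assumes "support_fun X y = ereal r" "x \<in> X"
  shows "y \<bullet> x \<le> r"
proof -
  have "ereal (y \<bullet> x) \<le> support_fun X y"
    unfolding support_fun_def using assms(2) by (rule SUP_upper)
  thus ?thesis using assms(1) by simp
qed

lemma support_lower:
  assumes "x \<in> X"
  shows "support_fun X y \<noteq> -\<infinity>"
proof -
  have "ereal (y \<bullet> x) \<le> support_fun X y"
    unfolding support_fun_def using assms by (rule SUP_upper)
  thus ?thesis by auto
qed

lemma exp_mat_scale: "exp_mat A (\<lambda>a. l * nu a) = l *\<^sub>R exp_mat A nu"
  unfolding exp_mat_def by (simp add: scaleR_sum_right)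

lemma exp_mat_inner: "exp_mat A nu \<bullet> x = (\<Sum>a\<in>A. nu a * (a \<bullet> x))"
  unfolding exp_mat_def by (simp add: inner_sum_left)

lemma suff:
  fixes g \<mu> d :: "'a::euclidean_space \<Rightarrow> real"
  assumes "finite A" "\<beta> \<in> A" "supp_in A g" "\<forall>a\<in>A-{\<beta>}. g a \<ge> 0"
    "(\<Sum>a\<in>A. \<mu> a) = 0" "\<forall>x\<in>X. - (exp_mat A \<mu>) \<bullet> x \<le> s"
    "\<forall>a\<in>A-{\<beta>}. \<forall>t. \<mu> a * t - d a \<le> g a * exp t"
    "s + (\<Sum>a\<in>A-{\<beta>}. d a) \<le> g \<beta>"
  shows "g \<in> AGE_cone X A \<beta>"
  unfolding AGE_cone_def
proof (intro CollectI conjI ballI)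
  show "supp_in A g" "\<And>a. a \<in> A - {\<beta>} \<Longrightarrow> 0 \<le> g a" using assms by auto
  fix x assume x: "x \<in> X"
  have each: "exp (\<beta> \<bullet> x) * (\<mu> a * (a \<bullet> x) - \<mu> a * (\<beta> \<bullet> x) - d a) \<le> g a * exp (a \<bullet> x)"
    if a: "a \<in> A - {\<beta>}" for a
  proof -
    have i: "(a - \<beta>) \<bullet> x = a \<bullet> x - \<beta> \<bullet> x" by (simp add: inner_diff_left)
    have eq: "exp (\<beta> \<bullet> x) * exp (a \<bullet> x - \<beta> \<bullet> x) = exp (a \<bullet> x)"
      by (simp add: exp_add[symmetric])
    have "\<mu> a * (a \<bullet> x - \<beta> \<bullet> x) - d a \<le> g a * exp (a \<bullet> x - \<beta> \<bullet> x)"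
      using assms(7) a by blast
    hence "exp (\<beta> \<bullet> x) * (\<mu> a * (a \<bullet> x - \<beta> \<bullet> x) - d a) \<le> exp (\<beta> \<bullet> x) * (g a * exp (a \<bullet> x - \<beta> \<bullet> x))"
      by (intro mult_left_mono) auto
    also have "\<dots> = g a * exp (a \<bullet> x)" using eq by (metis mult.left_commute)
    finally show ?thesis by (simp add: right_diff_distrib)
  qed
  have sA: "(\<Sum>a\<in>A. f a) = f \<beta> + (\<Sum>a\<in>A-{\<beta>}. f a)" for f :: "'a \<Rightarrow> real"
    using assms(1,2) by (simp add: sum.remove)
  have mb: "(\<Sum>a\<in>A-{\<beta>}. \<mu> a) = - \<mu> \<beta>" using assms(5) sA[of \<mu>] by linarith
  have em: "exp_mat A \<mu> \<bullet> x = \<mu> \<beta> * (\<beta> \<bullet> x) + (\<Sum>a\<in>A-{\<beta>}. \<mu> a * (a \<bullet> x))"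
    unfolding exp_mat_inner by (rule sA)
  have "(\<Sum>a\<in>A-{\<beta>}. exp (\<beta> \<bullet> x) * (\<mu> a * (a \<bullet> x) - \<mu> a * (\<beta> \<bullet> x) - d a))
        \<le> (\<Sum>a\<in>A-{\<beta>}. g a * exp (a \<bullet> x))"
    by (rule sum_mono) (rule each)
  moreover have "(\<Sum>a\<in>A-{\<beta>}. exp (\<beta> \<bullet> x) * (\<mu> a * (a \<bullet> x) - \<mu> a * (\<beta> \<bullet> x) - d a))
     = exp (\<beta> \<bullet> x) * ((\<Sum>a\<in>A-{\<beta>}. \<mu> a * (a \<bullet> x)) - (\<Sum>a\<in>A-{\<beta>}. \<mu> a) * (\<beta> \<bullet> x) - (\<Sum>a\<in>A-{\<beta>}. d a))"
    by (simp add: sum_distrib_left sum_subtractf sum_distrib_right sum.distrib algebra_simps)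
  moreover have "- (exp_mat A \<mu>) \<bullet> x \<le> s" using assms(6) x by blast
  moreover have "- s \<le> (\<Sum>a\<in>A-{\<beta>}. \<mu> a * (a \<bullet> x)) - (\<Sum>a\<in>A-{\<beta>}. \<mu> a) * (\<beta> \<bullet> x)"
    using calculation(3) mb em by (simp add: inner_minus_left)
  hence "exp (\<beta> \<bullet> x) * (- s - (\<Sum>a\<in>A-{\<beta>}. d a)) \<le> exp (\<beta> \<bullet> x) * ((\<Sum>a\<in>A-{\<beta>}. \<mu> a * (a \<bullet> x)) - (\<Sum>a\<in>A-{\<beta>}. \<mu> a) * (\<beta> \<bullet> x) - (\<Sum>a\<in>A-{\<beta>}. d a))"
    by (intro mult_left_mono) auto
  ultimately have low: "exp (\<beta> \<bullet> x) * (- s - (\<Sum>a\<in>A-{\<beta>}. d a)) \<le> (\<Sum>a\<in>A-{\<beta>}. g a * exp (a \<bullet> x))"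
    by linarith
  hence "0 \<le> g \<beta> * exp (\<beta> \<bullet> x) + (\<Sum>a\<in>A-{\<beta>}. g a * exp (a \<bullet> x))"
    using assms(8)
  proof -
    have "0 \<le> exp (\<beta> \<bullet> x) * (g \<beta> - s - (\<Sum>a\<in>A-{\<beta>}. d a))"
      using assms(8) by (intro mult_nonneg_nonneg) auto
    thus ?thesis using low
      by (simp add: algebra_simps)
  qed
  thus "0 \<le> (\<Sum>a\<in>A. g a * exp (a \<bullet> x))" using sA by simp
qed


theorem theorem4p2:
  fixes X :: "'a::euclidean_space set" and A :: "'a set" and \<beta> :: 'a
    and c nu :: "'a \<Rightarrow> real"
  assumes "closed X" and "convex X" and "X \<noteq> {}"
    and "finite A" and "A \<noteq> {}"
    and "\<forall>l :: 'a \<Rightarrow> real. (\<forall>x\<in>X. (\<Sum>a\<in>A. l a * exp (a \<bullet> x)) = 0) \<longrightarrow> (\<forall>a\<in>A. l a = 0)"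
    and "\<beta> \<in> A"
    and "c \<in> AGE_cone X A \<beta>" and "c \<beta> < 0"
    and "supp_in A nu" and "nu \<noteq> (\<lambda>_. 0)" and "(\<Sum>a\<in>A. nu a) = 0"
    and "support_fun X (- exp_mat A nu) + rel_entr (A - {\<beta>}) nu (\<lambda>a. exp 1 * c a) \<le> ereal (c \<beta>)"
    and "\<not> X_circuit X A \<beta> nu"
  shows "\<not> generates_extreme_ray (AGE_cone X A \<beta>) c"
proof
  assume ext: "generates_extreme_ray (AGE_cone X A \<beta>) c"
  note fin = assms(4) and bA = assms(7) and cC = assms(8) and nus = assms(10)
    and nun = assms(11) and nusum = assms(12) and H = assms(13) and nc = assms(14)
  obtain x0 where x0: "x0 \<in> X" using assms(3) by blast
  define S where "S = support_fun X (- exp_mat A nu)"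
  define R where "R = rel_entr (A - {\<beta>}) nu (\<lambda>a. exp 1 * c a)"
  have HSR: "S + R \<le> ereal (c \<beta>)" using H unfolding S_def R_def .
  have Sn: "S \<noteq> -\<infinity>" unfolding S_def using x0 by (rule support_lower)
  have cnn: "\<forall>a\<in>A-{\<beta>}. c a \<ge> 0" and csupp: "supp_in A c"
    using cC unfolding AGE_cone_def by auto
  have Rn: "R \<noteq> \<infinity>"
  proof
    assume "R = \<infinity>"
    hence SR: "S + R = \<infinity>" using Sn by (cases S) auto
    show False using HSR unfolding SR by simp
  qed
  have nneg: "\<forall>a\<in>A-{\<beta>}. nu a \<ge> 0"
  proof (rule ccontr)
    assume "\<not> ?thesis"
    then obtain i where "i \<in> A - {\<beta>}" "nu i < 0" by (auto simp: not_le)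
    hence "R = \<infinity>" unfolding R_def rel_entr_def by auto
    thus False using Rn by simp
  qed
  have Rsum: "R = (\<Sum>i\<in>A-{\<beta>}. rel_entr_term (nu i) (exp 1 * c i))"
  proof -
    have "\<not> (\<exists>i\<in>A - {\<beta>}. nu i < 0 \<or> exp 1 * c i < 0)"
      using nneg cnn by (auto simp: not_less)
    thus ?thesis unfolding R_def rel_entr_def by (simp only: if_False)
  qed
  have cpos: "\<forall>a\<in>A-{\<beta>}. nu a \<noteq> 0 \<longrightarrow> c a > 0"
  proof (intro ballI impI)
    fix a assume a: "a \<in> A - {\<beta>}" and n: "nu a \<noteq> 0"
    show "c a > 0"
    proof (rule ccontr)
      assume "\<not> c a > 0"
      hence "c a = 0" using cnn a by force
      hence "rel_entr_term (nu a) (exp 1 * c a) = \<infinity>" using n unfolding rel_entr_term_def by simp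
      hence "R = \<infinity>" unfolding Rsum using a fin by (subst sum_Pinfty) auto
      thus False using Rn by simp
    qed
  qed
  define L where "L a = ln (nu a / (exp 1 * c a))" for a
  have Req: "R = ereal (\<Sum>a\<in>A-{\<beta>}. nu a * L a)"
  proof -
    have "(\<Sum>i\<in>A-{\<beta>}. rel_entr_term (nu i) (exp 1 * c i)) = (\<Sum>a\<in>A-{\<beta>}. ereal (nu a * L a))"
    proof (rule sum.cong)
      fix a assume a: "a \<in> A - {\<beta>}"
      show "rel_entr_term (nu a) (exp 1 * c a) = ereal (nu a * L a)"
      proof (cases "nu a = 0")
        case True thus ?thesis unfolding rel_entr_term_def by simp
      next
        case False
        hence "c a > 0" using cpos a by blast
        thus ?thesis using False unfolding rel_entr_term_def L_def by simp
      qed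
    qed simp
    thus ?thesis unfolding Rsum by simp
  qed
  obtain s0 where s0: "S = ereal s0"
  proof (cases S)
    case (real r) thus ?thesis using that by simp
  next
    case PInf
    hence SR: "S + R = \<infinity>" using Req by simp
    show ?thesis using HSR unfolding SR by simp
  next
    case MInf thus ?thesis using Sn by simp
  qed
  have main: "s0 + (\<Sum>a\<in>A-{\<beta>}. nu a * L a) \<le> c \<beta>" using HSR s0 Req by simp
  have nuN: "nu \<in> N_set A \<beta>" unfolding N_set_def using nus nneg nusum by auto
  have "S < \<infinity>" using s0 by simp
  then obtain nu1 nu2 l where N1: "nu1 \<in> N_set A \<beta>" and N2: "nu2 \<in> N_set A \<beta>"
    and np: "\<not> proportional nu1 nu2" and l0: "0 < l" and l1: "l < 1"
    and nueq: "nu = (\<lambda>a. l * nu1 a + (1 - l) * nu2 a)" and aff: "affine_on_segment X A nu1 nu2"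
    using nc nuN nun unfolding X_circuit_def S_def by blast
  obtain p q where pq: "\<forall>t\<in>{0..1}. support_fun X (- exp_mat A (\<lambda>a. (1 - t) * nu1 a + t * nu2 a)) = ereal (p + q * t)"
    using aff unfolding affine_on_segment_def by blast
  have phi1: "support_fun X (- exp_mat A nu1) = ereal p" using pq[rule_format, of 0] by simp
  have phi2: "support_fun X (- exp_mat A nu2) = ereal (p + q)" using pq[rule_format, of 1] by simp
  have "(\<lambda>a. (1 - (1 - l)) * nu1 a + (1 - l) * nu2 a) = nu" using nueq by simp
  hence "S = ereal (p + q * (1 - l))" using pq[rule_format, of "1 - l"] l0 l1 unfolding S_def by simp
  hence s0eq: "s0 = p + q * (1 - l)" using s0 by simp
  define m1 where "m1 a = l * nu1 a" for a
  define m2 where "m2 a = (1 - l) * nu2 a" for a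
  have nuam: "nu a = m1 a + m2 a" for a using nueq unfolding m1_def m2_def by (simp add: fun_eq_iff)
  have m1nn: "\<forall>a\<in>A-{\<beta>}. m1 a \<ge> 0" using N1 l0 unfolding N_set_def m1_def by auto
  have m2nn: "\<forall>a\<in>A-{\<beta>}. m2 a \<ge> 0" using N2 l1 unfolding N_set_def m2_def by auto
  have nu1s: "supp_in A nu1" "(\<Sum>a\<in>A. nu1 a) = 0" using N1 unfolding N_set_def by auto
  have nu2s: "supp_in A nu2" "(\<Sum>a\<in>A. nu2 a) = 0" using N2 unfolding N_set_def by auto
  have m1sum: "(\<Sum>a\<in>A. m1 a) = 0" unfolding m1_def using nu1s by (simp add: sum_distrib_left[symmetric])
  have m2sum: "(\<Sum>a\<in>A. m2 a) = 0" unfolding m2_def using nu2s by (simp add: sum_distrib_left[symmetric])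
  have bnd1: "\<forall>x\<in>X. - (exp_mat A m1) \<bullet> x \<le> l * p"
  proof
    fix x assume x: "x \<in> X"
    have "(- exp_mat A nu1) \<bullet> x \<le> p" using support_upper[OF phi1 x] .
    hence "l * ((- exp_mat A nu1) \<bullet> x) \<le> l * p" using l0 by (intro mult_left_mono) auto
    moreover have "exp_mat A m1 = l *\<^sub>R exp_mat A nu1" unfolding m1_def[abs_def] by (rule exp_mat_scale)
    ultimately show "- (exp_mat A m1) \<bullet> x \<le> l * p" by simp
  qed
  have bnd2: "\<forall>x\<in>X. - (exp_mat A m2) \<bullet> x \<le> (1 - l) * (p + q)"
  proof
    fix x assume x: "x \<in> X"
    have "(- exp_mat A nu2) \<bullet> x \<le> p + q" using support_upper[OF phi2 x] .
    hence "(1 - l) * ((- exp_mat A nu2) \<bullet> x) \<le> (1 - l) * (p + q)" using l1 by (intro mult_left_mono) auto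
    moreover have "exp_mat A m2 = (1 - l) *\<^sub>R exp_mat A nu2" unfolding m2_def[abs_def] by (rule exp_mat_scale)
    ultimately show "- (exp_mat A m2) \<bullet> x \<le> (1 - l) * (p + q)" by simp
  qed
  have zero: "m1 a = 0 \<and> m2 a = 0" if "a \<in> A - {\<beta>}" "\<not> nu a > 0" for a
    using that nneg m1nn m2nn nuam[of a] by force
  define g where "g a = (if a \<in> A - {\<beta>} then (if nu a > 0 then c a * m1 a / nu a else 0)
      else if a = \<beta> then l * p + (\<Sum>b\<in>A-{\<beta>}. m1 b * L b) else 0)" for a
  define h where "h a = c a - g a" for a
  have gK: "g \<in> AGE_cone X A \<beta>"
  proof (rule suff[where \<mu> = m1 and s = "l * p" and d = "\<lambda>a. m1 a * L a"])
    show "finite A" "\<beta> \<in> A" "(\<Sum>a\<in>A. m1 a) = 0" "\<forall>x\<in>X. - exp_mat A m1 \<bullet> x \<le> l * p"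
      using fin bA m1sum bnd1 by auto
    show "supp_in A g" unfolding supp_in_def g_def using bA by auto
    show "\<forall>a\<in>A - {\<beta>}. 0 \<le> g a" unfolding g_def using cnn m1nn by auto
    show "l * p + (\<Sum>a\<in>A - {\<beta>}. m1 a * L a) \<le> g \<beta>" unfolding g_def by simp
    show "\<forall>a\<in>A - {\<beta>}. \<forall>t. m1 a * t - m1 a * L a \<le> g a * exp t"
    proof (intro ballI allI)
      fix a t assume a: "a \<in> A - {\<beta>}"
      show "m1 a * t - m1 a * L a \<le> g a * exp t"
      proof (cases "nu a > 0")
        case True
        hence "c a > 0" using cpos a by auto
        thus ?thesis using key_ineq[of "m1 a" "c a" "nu a" t] True a m1nn unfolding g_def L_def by auto
      next
        case False thus ?thesis using zero[OF a] a unfolding g_def by simp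
      qed
    qed
  qed
  have hK: "h \<in> AGE_cone X A \<beta>"
  proof (rule suff[where \<mu> = m2 and s = "(1 - l) * (p + q)" and d = "\<lambda>a. m2 a * L a"])
    show "finite A" "\<beta> \<in> A" "(\<Sum>a\<in>A. m2 a) = 0" "\<forall>x\<in>X. - exp_mat A m2 \<bullet> x \<le> (1 - l) * (p + q)"
      using fin bA m2sum bnd2 by auto
    show "supp_in A h" unfolding supp_in_def h_def g_def using bA csupp unfolding supp_in_def by auto
    have hval: "h a = c a * m2 a / nu a" if "a \<in> A - {\<beta>}" "nu a > 0" for a
      using that nuam[of a] unfolding h_def g_def by (simp add: field_simps)
    have hval0: "h a = c a" if "a \<in> A - {\<beta>}" "\<not> nu a > 0" for a
      using that unfolding h_def g_def by simp
    show "\<forall>a\<in>A - {\<beta>}. 0 \<le> h a"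
    proof
      fix a assume a: "a \<in> A - {\<beta>}"
      show "0 \<le> h a"
        by (cases "nu a > 0") (use a hval hval0 cnn m2nn in auto)
    qed
    have "(\<Sum>a\<in>A-{\<beta>}. nu a * L a) = (\<Sum>a\<in>A-{\<beta>}. m1 a * L a) + (\<Sum>a\<in>A-{\<beta>}. m2 a * L a)"
      unfolding nuam by (simp add: sum.distrib distrib_right)
    moreover have "h \<beta> = c \<beta> - (l * p + (\<Sum>b\<in>A-{\<beta>}. m1 b * L b))" unfolding h_def g_def by simp
    ultimately show "(1 - l) * (p + q) + (\<Sum>a\<in>A - {\<beta>}. m2 a * L a) \<le> h \<beta>"
      using main s0eq by (simp add: algebra_simps)
    show "\<forall>a\<in>A - {\<beta>}. \<forall>t. m2 a * t - m2 a * L a \<le> h a * exp t"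
    proof (intro ballI allI)
      fix a t assume a: "a \<in> A - {\<beta>}"
      show "m2 a * t - m2 a * L a \<le> h a * exp t"
      proof (cases "nu a > 0")
        case True
        hence "c a > 0" using cpos a by auto
        thus ?thesis using key_ineq[of "m2 a" "c a" "nu a" t] True a m2nn hval[OF a True] unfolding L_def by auto
      next
        case False thus ?thesis using zero[OF a] a hval0[OF a False] cnn by simp
      qed
    qed
  qed
  have cgh: "c = (\<lambda>a. g a + h a)" unfolding h_def by simp
  obtain s where gs: "g = (\<lambda>a. s * c a)"
    using ext gK hK cgh unfolding generates_extreme_ray_def by blast
  have mA: "m1 a = s * nu a" if a: "a \<in> A - {\<beta>}" for a
  proof (cases "nu a > 0")
    case True
    hence cp: "c a > 0" using cpos a by auto
    have "c a * m1 a / nu a = s * c a" using fun_cong[OF gs, of a] a True unfolding g_def by simp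
    thus ?thesis using cp True by (simp add: field_simps)
  next
    case False thus ?thesis using zero[OF a] nneg a by force
  qed
  have sA: "(\<Sum>a\<in>A. f a) = f \<beta> + (\<Sum>a\<in>A-{\<beta>}. f a)" for f :: "'a \<Rightarrow> real"
    using fin bA by (simp add: sum.remove)
  have m1eq: "m1 = (\<lambda>a. s * nu a)"
  proof
    fix a
    show "m1 a = s * nu a"
    proof (cases "a \<in> A")
      case False
      thus ?thesis using nus nu1s unfolding supp_in_def m1_def by simp
    next
      case True
      show ?thesis
      proof (cases "a = \<beta>")
        case False thus ?thesis using mA True by simp
      next
        case b: True
        have "(\<Sum>a\<in>A-{\<beta>}. m1 a) = (\<Sum>a\<in>A-{\<beta>}. s * nu a)" using mA by simp
        also have "\<dots> = s * (\<Sum>a\<in>A-{\<beta>}. nu a)" by (simp add: sum_distrib_left)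
        finally have q1: "(\<Sum>a\<in>A-{\<beta>}. m1 a) = s * (\<Sum>a\<in>A-{\<beta>}. nu a)" .
        have q2: "nu \<beta> = - (\<Sum>a\<in>A-{\<beta>}. nu a)" using sA[of nu] nusum by linarith
        have "m1 \<beta> = - (\<Sum>a\<in>A-{\<beta>}. m1 a)" using sA[of m1] m1sum by linarith
        hence "m1 \<beta> = s * nu \<beta>" unfolding q1 q2 by simp
        thus ?thesis using b by simp
      qed
    qed
  qed
  have m2eq: "m2 a = (1 - s) * nu a" for a using nuam[of a] m1eq by (simp add: fun_eq_iff algebra_simps)
  have "proportional nu1 nu2"
  proof (cases "s = 1")
    case True
    have "nu2 = (\<lambda>a. 0 * nu1 a)"
    proof
      fix a show "nu2 a = 0 * nu1 a" using m2eq[of a] True l1 unfolding m2_def by simp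
    qed
    thus ?thesis unfolding proportional_def by blast
  next
    case False
    have "nu1 = (\<lambda>a. (s * (1 - l) / (l * (1 - s))) * nu2 a)"
    proof
      fix a
      have e1: "l * nu1 a = s * nu a" using fun_cong[OF m1eq, of a] unfolding m1_def by simp
      have e2: "(1 - l) * nu2 a = (1 - s) * nu a" using m2eq[of a] unfolding m2_def by simp
      have "nu a = (1 - l) * nu2 a / (1 - s)" using e2 False by (simp add: field_simps)
      moreover have "nu1 a = s * nu a / l" using e1 l0 by (simp add: field_simps)
      ultimately have "nu1 a = s * ((1 - l) * nu2 a / (1 - s)) / l" by simp
      moreover have "1 - s \<noteq> 0" "l \<noteq> 0" using False l0 by auto
      ultimately show "nu1 a = (s * (1 - l) / (l * (1 - s))) * nu2 a" by (simp add: ac_simps)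
    qed
    thus ?thesis unfolding proportional_def by blast
  qed
  thus False using np by simp
qed

end
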